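(* For every pair of positive integers $(m,n)$ there exists a nonzero bounded big Hankel operator $\Gamma:H^2(\mathbb T^2)\to H^2(\mathbb T^2)^\perp$ of finite type $(m,n)$ such that $\sigma_{pq}(\Gamma)=0$ for all $p>m$ and $q>n$.
   Context: $H^2(\mathbb T^2)$ is the subspace of $L^2(\mathbb T^2)$ of functions with Fourier coefficients supported in $\{m,n\ge0\}$, and $P$ is its orthogonal projection. A big Hankel operator is an operator of the form $\Gamma_\phi f=(I-P)(\phi f)$ with $\phi\in L^2(\mathbb T^2)$. A closed subspace $\mathcal I\subset H^2(\mathbb T^2)$ has finite bi-codimension $(m,n)$ if $\mathcal I=V_1\otimes V_2$ (closed span of products $f(x)g(y)$) with $V_1,V_2\subset H^2(\mathbb T)$ closed of codimensions $m$ and $n$. A bounded Hankel operator is of finite type $(m,n)$ if its kernel has finite bi-codimension $(m,n)$. For a bounded Hankel operator $\Gamma$ and integers $p,q\ge0$, $$\sigma_{pq}(\Gamma)=\inf\{\|\Gamma|_{\mathcal I}\|\},$$ where the infimum runs over closed subspaces $\mathcal I\subset H^2(\mathbb T^2)$ invariant under multiplication by $e^{ix}$ and by $e^{iy}$ that have finite bi-codimension at most $(p,q)$. Equivalently, these are the subspaces $\mathcal I=b_1(x)b_2(y)H^2(\mathbb T^2)$ with $b_1$, $b_2$ finite Blaschke products having at most $p$ and $q$ factors, respectively. *)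

theory Defs
  imports "HOL-Analysis.Analysis"
begin

text \<open>Functions on the torus are represented by their Fourier coefficients
  (Parseval: L2 is isometric to l2 of the coefficients).\<close>

definition l2 :: "('a \<Rightarrow> complex) \<Rightarrow> bool" where
  "l2 f \<longleftrightarrow> (\<lambda>k. (cmod (f k))\<^sup>2) summable_on UNIV"

definition l2norm :: "('a \<Rightarrow> complex) \<Rightarrow> real" where
  "l2norm f = sqrt (\<Sum>\<^sub>\<infinity>k. (cmod (f k))\<^sup>2)"

definition l2inner :: "('a \<Rightarrow> complex) \<Rightarrow> ('a \<Rightarrow> complex) \<Rightarrow> complex" where
  "l2inner f g = (\<Sum>\<^sub>\<infinity>k. f k * cnj (g k))"

definition H2_1 :: "(int \<Rightarrow> complex) set" where
  "H2_1 = {f. l2 f \<and> (\<forall>k<0. f k = 0)}"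

definition H2_2 :: "(int \<times> int \<Rightarrow> complex) set" where
  "H2_2 = {f. l2 f \<and> (\<forall>a b. (a < 0 \<or> b < 0) \<longrightarrow> f (a, b) = 0)}"

text \<open>Fourier coefficients of the product phi * f (convolution).\<close>
definition conv2 :: "(int \<times> int \<Rightarrow> complex) \<Rightarrow> (int \<times> int \<Rightarrow> complex) \<Rightarrow> (int \<times> int \<Rightarrow> complex)" where
  "conv2 \<phi> f = (\<lambda>(a, b). \<Sum>\<^sub>\<infinity>(c, d). \<phi> (a - c, b - d) * f (c, d))"

text \<open>Big Hankel operator Gamma_phi f = (I - P)(phi f).\<close>
definition hankel :: "(int \<times> int \<Rightarrow> complex) \<Rightarrow> (int \<times> int \<Rightarrow> complex) \<Rightarrow> (int \<times> int \<Rightarrow> complex)" where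
  "hankel \<phi> f = (\<lambda>(a, b). if a \<ge> 0 \<and> b \<ge> 0 then 0 else conv2 \<phi> f (a, b))"

definition bounded_op :: "((int \<times> int \<Rightarrow> complex) \<Rightarrow> (int \<times> int \<Rightarrow> complex)) \<Rightarrow> bool" where
  "bounded_op T \<longleftrightarrow> (\<exists>C. \<forall>f\<in>H2_2. l2 (T f) \<and> l2norm (T f) \<le> C * l2norm f)"

definition op_kernel :: "((int \<times> int \<Rightarrow> complex) \<Rightarrow> (int \<times> int \<Rightarrow> complex)) \<Rightarrow> (int \<times> int \<Rightarrow> complex) set" where
  "op_kernel T = {f \<in> H2_2. T f = (\<lambda>_. 0)}"

text \<open>A closed subspace V of H2(T) has codimension m: it is the orthogonal
  complement (in H2(T)) of an m-dimensional subspace, spanned by an orthonormal family.\<close>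
definition has_codim :: "(int \<Rightarrow> complex) set \<Rightarrow> nat \<Rightarrow> bool" where
  "has_codim V m \<longleftrightarrow> (\<exists>e :: nat \<Rightarrow> int \<Rightarrow> complex.
      (\<forall>i<m. e i \<in> H2_1) \<and>
      (\<forall>i<m. \<forall>j<m. l2inner (e i) (e j) = (if i = j then 1 else 0)) \<and>
      V = {f \<in> H2_1. \<forall>i<m. l2inner f (e i) = 0})"

text \<open>Closed span (in l2) of the products f(x) g(y), f in V1, g in V2.\<close>
definition tensor_sp :: "(int \<Rightarrow> complex) set \<Rightarrow> (int \<Rightarrow> complex) set \<Rightarrow> (int \<times> int \<Rightarrow> complex) set" where
  "tensor_sp V1 V2 = {h. l2 h \<and> (\<forall>\<epsilon>>0. \<exists>N (c :: nat \<Rightarrow> complex) (f :: nat \<Rightarrow> int \<Rightarrow> complex) (g :: nat \<Rightarrow> int \<Rightarrow> complex).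
      (\<forall>i<N. f i \<in> V1 \<and> g i \<in> V2) \<and>
      l2norm (\<lambda>(a, b). h (a, b) - (\<Sum>i<N. c i * f i a * g i b)) < \<epsilon>)}"

definition has_bicodim :: "(int \<times> int \<Rightarrow> complex) set \<Rightarrow> nat \<Rightarrow> nat \<Rightarrow> bool" where
  "has_bicodim I m n \<longleftrightarrow> (\<exists>V1 V2. has_codim V1 m \<and> has_codim V2 n \<and> I = tensor_sp V1 V2)"

definition finite_type :: "((int \<times> int \<Rightarrow> complex) \<Rightarrow> (int \<times> int \<Rightarrow> complex)) \<Rightarrow> nat \<Rightarrow> nat \<Rightarrow> bool" where
  "finite_type T m n \<longleftrightarrow> bounded_op T \<and> has_bicodim (op_kernel T) m n"

text \<open>Multiplication by e^{ix} and e^{iy}: shifts of Fourier coefficients.\<close>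
definition shift_x :: "(int \<times> int \<Rightarrow> complex) \<Rightarrow> (int \<times> int \<Rightarrow> complex)" where
  "shift_x f = (\<lambda>(a, b). f (a - 1, b))"

definition shift_y :: "(int \<times> int \<Rightarrow> complex) \<Rightarrow> (int \<times> int \<Rightarrow> complex)" where
  "shift_y f = (\<lambda>(a, b). f (a, b - 1))"

definition shift_invariant :: "(int \<times> int \<Rightarrow> complex) set \<Rightarrow> bool" where
  "shift_invariant I \<longleftrightarrow> (\<forall>f\<in>I. shift_x f \<in> I \<and> shift_y f \<in> I)"

definition restr_norm :: "((int \<times> int \<Rightarrow> complex) \<Rightarrow> (int \<times> int \<Rightarrow> complex)) \<Rightarrow> (int \<times> int \<Rightarrow> complex) set \<Rightarrow> real" where
  "restr_norm T I = Sup {l2norm (T f) | f. f \<in> I \<and> l2norm f \<le> 1}"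

definition sigma :: "nat \<Rightarrow> nat \<Rightarrow> ((int \<times> int \<Rightarrow> complex) \<Rightarrow> (int \<times> int \<Rightarrow> complex)) \<Rightarrow> real" where
  "sigma p q T = Inf {restr_norm T I | I. I \<subseteq> H2_2 \<and> shift_invariant I \<and>
      (\<exists>p' q'. p' \<le> p \<and> q' \<le> q \<and> has_bicodim I p' q')}"

end

theory Submission imports Defs begin

lemma infsum_single_pt:
  fixes f :: "'a \<Rightarrow> 'b::{comm_monoid_add,t2_space}"
  assumes "\<And>x. x \<noteq> k \<Longrightarrow> f x = 0"
  shows "infsum f UNIV = f k"
proof -
  have "infsum f UNIV = infsum f {k}"
    by (rule infsum_cong_neutral) (use assms in auto)
  then show ?thesis by simp
qed

lemma l2_finite_support:
  assumes "finite S" "\<And>x. x \<notin> S \<Longrightarrow> f x = 0"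
  shows "l2 f"
proof -
  have "(\<lambda>k. (cmod (f k))\<^sup>2) summable_on S" using assms(1) by simp
  moreover have "(\<lambda>k. (cmod (f k))\<^sup>2) summable_on S \<longleftrightarrow> (\<lambda>k. (cmod (f k))\<^sup>2) summable_on UNIV"
    by (rule summable_on_cong_neutral) (use assms in auto)
  ultimately show ?thesis unfolding l2_def by simp
qed

lemma l2_zero: "l2 (\<lambda>_. 0)"
  by (rule l2_finite_support[of "{}"]) auto

lemma l2norm_zero: "l2norm (\<lambda>_. 0) = 0"
  unfolding l2norm_def by simp

lemma l2_add:
  assumes "l2 f" "l2 g" shows "l2 (\<lambda>k. f k + g k)"
proof -
  have s: "(\<lambda>k. 2 * (cmod (f k))\<^sup>2 + 2 * (cmod (g k))\<^sup>2) summable_on UNIV"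
    using assms unfolding l2_def by (intro summable_on_add summable_on_cmult_right) auto
  have b: "(cmod (f k + g k))\<^sup>2 \<le> 2 * (cmod (f k))\<^sup>2 + 2 * (cmod (g k))\<^sup>2" for k
  proof -
    have "cmod (f k + g k) \<le> cmod (f k) + cmod (g k)" by (rule norm_triangle_ineq)
    then have "(cmod (f k + g k))\<^sup>2 \<le> (cmod (f k) + cmod (g k))\<^sup>2"
      by (simp add: power_mono)
    also have "\<dots> \<le> 2 * (cmod (f k))\<^sup>2 + 2 * (cmod (g k))\<^sup>2"
      by (smt (verit) sum_squares_bound power2_sum)
    finally show ?thesis .
  qed
  show ?thesis unfolding l2_def
    by (rule summable_on_comparison_test[OF s]) (use b in auto)
qed

lemma l2_neg: "l2 f \<Longrightarrow> l2 (\<lambda>k. - f k)"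
  unfolding l2_def by simp

lemma l2_diff: "l2 f \<Longrightarrow> l2 g \<Longrightarrow> l2 (\<lambda>k. f k - g k)"
  using l2_add[of f "\<lambda>k. - g k"] l2_neg[of g] by simp

lemma l2_sum:
  assumes "finite A" "\<And>i. i \<in> A \<Longrightarrow> l2 (F i)"
  shows "l2 (\<lambda>k. \<Sum>i\<in>A. F i k)"
  using assms
proof (induction A rule: finite_induct)
  case empty then show ?case using l2_zero by simp
next
  case (insert x A)
  then show ?case using l2_add[of "F x" "\<lambda>k. \<Sum>i\<in>A. F i k"] by simp
qed

lemma l2_prod:
  assumes "l2 f" "l2 g"
  shows "l2 (\<lambda>(a, b). c * f a * g b)"
proof -
  obtain SG where SG: "((\<lambda>b. (cmod (g b))\<^sup>2) has_sum SG) UNIV"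
    using assms(2) unfolding l2_def summable_on_def by blast
  have "(\<lambda>(a,b). (cmod c)\<^sup>2 * (cmod (f a))\<^sup>2 * (cmod (g b))\<^sup>2) summable_on Sigma UNIV (\<lambda>_. UNIV)"
  proof (rule summable_on_SigmaI[where g = "\<lambda>a. (cmod c)\<^sup>2 * (cmod (f a))\<^sup>2 * SG"])
    fix a
    show "((\<lambda>y. case (a, y) of (a, b) \<Rightarrow> (cmod c)\<^sup>2 * (cmod (f a))\<^sup>2 * (cmod (g b))\<^sup>2) has_sum
          (cmod c)\<^sup>2 * (cmod (f a))\<^sup>2 * SG) UNIV"
      using has_sum_cmult_right[OF SG, of "(cmod c)\<^sup>2 * (cmod (f a))\<^sup>2"] by simp
  next
    show "(\<lambda>a. (cmod c)\<^sup>2 * (cmod (f a))\<^sup>2 * SG) summable_on UNIV"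
      using assms(1) unfolding l2_def
      by (intro summable_on_cmult_left summable_on_cmult_right) auto
  qed auto
  then show ?thesis unfolding l2_def case_prod_unfold
    by (simp add: norm_mult power_mult_distrib)
qed

lemma l2_pt_le:
  assumes "l2 d" shows "cmod (d k) \<le> l2norm d"
proof -
  have "sum (\<lambda>k. (cmod (d k))\<^sup>2) {k} \<le> infsum (\<lambda>k. (cmod (d k))\<^sup>2) UNIV"
    by (rule finite_sum_le_infsum) (use assms in \<open>auto simp: l2_def\<close>)
  then have "(cmod (d k))\<^sup>2 \<le> infsum (\<lambda>k. (cmod (d k))\<^sup>2) UNIV" by simp
  then show ?thesis unfolding l2norm_def by (simp add: real_le_rsqrt)
qed


definition delta1 :: "int \<Rightarrow> int \<Rightarrow> complex" where
  "delta1 j = (\<lambda>k. if k = j then 1 else 0)"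

definition phi0 :: "nat \<Rightarrow> nat \<Rightarrow> int \<times> int \<Rightarrow> complex" where
  "phi0 m n = (\<lambda>k. if k = (- int m, - int n) then 1 else 0)"

definition Qs :: "nat \<Rightarrow> nat \<Rightarrow> (int \<times> int \<Rightarrow> complex) set" where
  "Qs m n = {h. l2 h \<and> (\<forall>a b. (a < int m \<or> b < int n) \<longrightarrow> h (a, b) = 0)}"

definition Vs :: "nat \<Rightarrow> (int \<Rightarrow> complex) set" where
  "Vs m = {f \<in> H2_1. \<forall>k < int m. f k = 0}"

definition Hf :: "nat \<Rightarrow> nat \<Rightarrow> (int \<times> int \<Rightarrow> complex) \<Rightarrow> (int \<times> int \<Rightarrow> complex)" where
  "Hf m n f = (\<lambda>(a, b). if a \<ge> 0 \<and> b \<ge> 0 then 0 else f (a + int m, b + int n))"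

lemma l2_phi0: "l2 (phi0 m n)"
  by (rule l2_finite_support[of "{(- int m, - int n)}"]) (auto simp: phi0_def)

lemma hankel_phi0: "hankel (phi0 m n) f = Hf m n f"
proof -
  have "conv2 (phi0 m n) f (a, b) = f (a + int m, b + int n)" for a b
  proof -
    have "conv2 (phi0 m n) f (a, b) = (\<Sum>\<^sub>\<infinity>x. (case x of (c, d) \<Rightarrow> phi0 m n (a - c, b - d) * f (c, d)))"
      unfolding conv2_def by simp
    also have "\<dots> = (case (a + int m, b + int n) of (c, d) \<Rightarrow> phi0 m n (a - c, b - d) * f (c, d))"
      by (rule infsum_single_pt) (auto simp: phi0_def split: if_splits)
    also have "\<dots> = f (a + int m, b + int n)" by (simp add: phi0_def)
    finally show ?thesis .
  qed
  then show ?thesis unfolding hankel_def Hf_def by (auto simp: fun_eq_iff)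
qed

lemma l2inner_delta: "l2inner f (delta1 j) = f j"
  unfolding l2inner_def
  by (subst infsum_single_pt[where k=j]) (auto simp: delta1_def)

lemma delta_H2: "j \<ge> 0 \<Longrightarrow> delta1 j \<in> H2_1"
  unfolding H2_1_def by (auto intro!: l2_finite_support[of "{j}"] simp: delta1_def split: if_splits)

lemma codim_Vs: "has_codim (Vs m) m"
  unfolding has_codim_def
proof (intro exI[of _ "\<lambda>i. delta1 (int i)"] conjI allI impI)
  show "delta1 (int i) \<in> H2_1" for i by (rule delta_H2) simp
  show "l2inner (delta1 (int i)) (delta1 (int j)) = (if i = j then 1 else 0)" for i j
    by (subst l2inner_delta) (simp add: delta1_def)
  show "Vs m = {f \<in> H2_1. \<forall>i<m. l2inner f (delta1 (int i)) = 0}"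
    unfolding Vs_def l2inner_delta
  proof (safe)
    fix f k assume f: "f \<in> H2_1" "\<forall>i<m. f (int i) = 0" "k < int m"
    show "f k = 0"
    proof (cases "k < 0")
      case True then show ?thesis using f(1) by (auto simp: H2_1_def)
    next
      case False then show ?thesis using f(2)[rule_format, of "nat k"] f(3) by auto
    qed
  qed auto
qed

lemma Hf_bound:
  assumes "l2 f"
  shows "l2 (Hf m n f) \<and> l2norm (Hf m n f) \<le> l2norm f"
proof -
  define \<tau> where "\<tau> = (\<lambda>(a::int, b::int). (a + int m, b + int n))"
  have bij: "bij_betw \<tau> UNIV UNIV"
    unfolding \<tau>_def
    by (rule bij_betw_byWitness[where f' = "\<lambda>(a,b). (a - int m, b - int n)"]) auto
  let ?F = "\<lambda>k. (cmod (f k))\<^sup>2"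
  have sF: "(\<lambda>k. ?F (\<tau> k)) summable_on UNIV"
    using summable_on_reindex_bij_betw[OF bij, of ?F] assms by (simp add: l2_def)
  have eqF: "infsum (\<lambda>k. ?F (\<tau> k)) UNIV = infsum ?F UNIV"
    by (rule infsum_reindex_bij_betw[OF bij])
  have pt: "(cmod (Hf m n f k))\<^sup>2 \<le> ?F (\<tau> k)" for k
    by (cases k) (auto simp: Hf_def \<tau>_def)
  have sH: "(\<lambda>k. (cmod (Hf m n f k))\<^sup>2) summable_on UNIV"
    by (rule summable_on_comparison_test[OF sF]) (use pt in auto)
  have "infsum (\<lambda>k. (cmod (Hf m n f k))\<^sup>2) UNIV \<le> infsum (\<lambda>k. ?F (\<tau> k)) UNIV"
    by (rule infsum_mono[OF sH sF]) (use pt in auto)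
  then show ?thesis using sH eqF unfolding l2_def l2norm_def by simp
qed

lemma Hf_zero: "Hf m n (\<lambda>_. 0) = (\<lambda>_. 0)"
  by (auto simp: Hf_def fun_eq_iff)

lemma bounded_Hf: "bounded_op (Hf m n)"
  unfolding bounded_op_def
  by (rule exI[of _ 1]) (auto simp: H2_2_def dest: Hf_bound)

lemma kernel_Hf: "op_kernel (Hf m n) = Qs m n"
proof safe
  fix f assume "f \<in> op_kernel (Hf m n)"
  then have f: "l2 f" "\<And>a b. a < 0 \<or> b < 0 \<Longrightarrow> f (a, b) = 0" "Hf m n f = (\<lambda>_. 0)"
    by (auto simp: op_kernel_def H2_2_def)
  show "f \<in> Qs m n" unfolding Qs_def
  proof (intro CollectI conjI allI impI)
    fix a b assume ab: "a < int m \<or> b < int n"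
    show "f (a, b) = 0"
    proof (cases "a < 0 \<or> b < 0")
      case True then show ?thesis using f(2) by blast
    next
      case False
      have "Hf m n f (a - int m, b - int n) = 0" using f(3) by simp
      then show ?thesis using ab False by (auto simp: Hf_def split: if_splits)
    qed
  qed (use f in auto)
next
  fix f assume "f \<in> Qs m n"
  then show "f \<in> op_kernel (Hf m n)"
    by (auto simp: Qs_def op_kernel_def H2_2_def Hf_def fun_eq_iff)
qed


lemma l2_tail:
  assumes "l2 h" "e > 0"
  obtains F where "finite F" "infsum (\<lambda>k. if k \<in> F then 0 else (cmod (h k))\<^sup>2) UNIV < e"
proof -
  let ?g = "\<lambda>k. (cmod (h k))\<^sup>2"
  let ?S = "infsum ?g UNIV"
  have sg: "?g summable_on UNIV" using assms(1) by (simp add: l2_def)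
  have "(?g has_sum ?S) UNIV" using sg by (rule has_sum_infsum)
  then have "(sum ?g \<longlongrightarrow> ?S) (finite_subsets_at_top UNIV)" by (simp add: has_sum_def)
  then have "\<forall>\<^sub>F X in finite_subsets_at_top UNIV. dist (sum ?g X) ?S < e"
    using assms(2) by (rule tendstoD)
  then obtain X where X: "finite X" "dist (sum ?g X) ?S < e"
    unfolding eventually_finite_subsets_at_top by blast
  have t1: "infsum (\<lambda>k. if k \<in> X then 0 else ?g k) UNIV = infsum ?g (UNIV - X)"
    by (rule infsum_cong_neutral) auto
  have "?S = infsum ?g (X \<union> (UNIV - X))" by simp
  also have "\<dots> = infsum ?g X + infsum ?g (UNIV - X)"
    by (rule infsum_Un_disjoint) (auto intro: summable_on_subset_banach[OF sg])
  finally have "infsum ?g (UNIV - X) = ?S - sum ?g X" using X(1) by simp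
  then have "infsum (\<lambda>k. if k \<in> X then 0 else ?g k) UNIV < e"
    using t1 X(2) by (simp add: dist_real_def)
  then show ?thesis using X(1) that by blast
qed

lemma l2_reindex:
  assumes "l2 f" "bij \<sigma>"
  shows "l2 (\<lambda>k. f (\<sigma> k))"
  using summable_on_reindex_bij_betw[OF assms(2), of "\<lambda>k. (cmod (f k))\<^sup>2"] assms(1)
  by (simp add: l2_def)

lemma shift_inv_Qs: "shift_invariant (Qs m n)"
  unfolding shift_invariant_def
proof (intro ballI conjI)
  fix f assume f: "f \<in> Qs m n"
  have b1: "bij (\<lambda>(a::int, b::int). (a - 1, b))"
    by (rule bij_betw_byWitness[where f' = "\<lambda>(a,b). (a + 1, b)"]) auto
  have b2: "bij (\<lambda>(a::int, b::int). (a, b - 1))"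
    by (rule bij_betw_byWitness[where f' = "\<lambda>(a,b). (a, b + 1)"]) auto
  have "l2 (\<lambda>k. f ((\<lambda>(a::int, b::int). (a - 1, b)) k))"
    using l2_reindex[OF _ b1] f by (auto simp: Qs_def)
  moreover have "shift_x f = (\<lambda>k. f ((\<lambda>(a::int, b::int). (a - 1, b)) k))"
    by (auto simp: shift_x_def fun_eq_iff)
  ultimately show "shift_x f \<in> Qs m n" using f by (auto simp: Qs_def shift_x_def)
  have "l2 (\<lambda>k. f ((\<lambda>(a::int, b::int). (a, b - 1)) k))"
    using l2_reindex[OF _ b2] f by (auto simp: Qs_def)
  moreover have "shift_y f = (\<lambda>k. f ((\<lambda>(a::int, b::int). (a, b - 1)) k))"
    by (auto simp: shift_y_def fun_eq_iff)
  ultimately show "shift_y f \<in> Qs m n" using f by (auto simp: Qs_def shift_y_def)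
qed

lemma Qs_H2: "Qs m n \<subseteq> H2_2"
  by (force simp: Qs_def H2_2_def)

lemma zero_tensor: "(\<lambda>_. 0) \<in> tensor_sp V1 V2"
  unfolding tensor_sp_def
proof (intro CollectI conjI allI impI l2_zero)
  fix e :: real assume "e > 0"
  then show "\<exists>N (c :: nat \<Rightarrow> complex) (f :: nat \<Rightarrow> int \<Rightarrow> complex) (g :: nat \<Rightarrow> int \<Rightarrow> complex).
      (\<forall>i<N. f i \<in> V1 \<and> g i \<in> V2) \<and>
      l2norm (\<lambda>(a, b). (\<lambda>_. 0) (a, b) - (\<Sum>i<N. c i * f i a * g i b)) < e"
    by (intro exI[of _ 0]) (simp add: case_prod_unfold l2norm_zero)
qed

lemma tensor_sub: "tensor_sp (Vs m) (Vs n) \<subseteq> Qs m n"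
proof
  fix h assume h: "h \<in> tensor_sp (Vs m) (Vs n)"
  have lh: "l2 h" using h by (simp add: tensor_sp_def)
  show "h \<in> Qs m n" unfolding Qs_def
  proof (intro CollectI conjI allI impI lh)
    fix a0 b0 assume ab: "a0 < int m \<or> b0 < int n"
    show "h (a0, b0) = 0"
    proof (rule ccontr)
      assume nz: "h (a0, b0) \<noteq> 0"
      then have pos: "cmod (h (a0, b0)) > 0" by simp
      have ex: "\<forall>\<epsilon>>0. \<exists>N (c :: nat \<Rightarrow> complex) (f :: nat \<Rightarrow> int \<Rightarrow> complex) (g :: nat \<Rightarrow> int \<Rightarrow> complex).
        (\<forall>i<N. f i \<in> Vs m \<and> g i \<in> Vs n) \<and>
        l2norm (\<lambda>(a, b). h (a, b) - (\<Sum>i<N. c i * f i a * g i b)) < \<epsilon>"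
        using h by (simp add: tensor_sp_def)
      from ex[rule_format, OF pos] obtain N and c :: "nat \<Rightarrow> complex" and f g :: "nat \<Rightarrow> int \<Rightarrow> complex" where fg: "\<forall>i<N. f i \<in> Vs m \<and> g i \<in> Vs n"
        and lt: "l2norm (\<lambda>(a, b). h (a, b) - (\<Sum>i<N. c i * f i a * g i b)) < cmod (h (a0, b0))"
        by (elim exE conjE) (rule that, assumption+)
      let ?P = "\<lambda>i. (\<lambda>(a, b). c i * f i a * g i b)"
      have "l2 (\<lambda>k. \<Sum>i\<in>{..<N}. ?P i k)"
        by (rule l2_sum) (use fg in \<open>auto intro!: l2_prod simp: Vs_def H2_1_def\<close>)
      then have ld: "l2 (\<lambda>k. h k - (\<Sum>i\<in>{..<N}. ?P i k))" using lh by (rule l2_diff[rotated])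
      have deq: "(\<lambda>(a, b). h (a, b) - (\<Sum>i<N. c i * f i a * g i b)) = (\<lambda>k. h k - (\<Sum>i\<in>{..<N}. ?P i k))"
        by (auto simp: fun_eq_iff)
      have zero: "(\<Sum>i<N. c i * f i a0 * g i b0) = 0"
      proof (rule sum.neutral, rule ballI)
        fix i assume "i \<in> {..<N}"
        then have "f i a0 = 0 \<or> g i b0 = 0" using fg ab by (auto simp: Vs_def)
        then show "c i * f i a0 * g i b0 = 0" by auto
      qed
      have "cmod (h (a0, b0)) \<le> l2norm (\<lambda>k. h k - (\<Sum>i\<in>{..<N}. ?P i k))"
        using l2_pt_le[OF ld, of "(a0, b0)"] zero by simp
      then show False using lt deq by simp
    qed
  qed
qed

lemma tensor_sup: "Qs m n \<subseteq> tensor_sp (Vs m) (Vs n)"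
proof
  fix h assume h: "h \<in> Qs m n"
  have lh: "l2 h" and hz: "\<And>a b. a < int m \<or> b < int n \<Longrightarrow> h (a, b) = 0"
    using h by (auto simp: Qs_def)
  show "h \<in> tensor_sp (Vs m) (Vs n)" unfolding tensor_sp_def
  proof (intro CollectI conjI allI impI lh)
    fix e :: real assume e: "e > 0"
    then obtain F where F: "finite F" "infsum (\<lambda>k. if k \<in> F then 0 else (cmod (h k))\<^sup>2) UNIV < e\<^sup>2"
      using l2_tail[OF lh, of "e\<^sup>2"] by auto
    define F' where "F' = F \<inter> {k. fst k \<ge> int m \<and> snd k \<ge> int n}"
    have fF': "finite F'" using F(1) by (simp add: F'_def)
    obtain gg where gg: "bij_betw gg {0..<card F'} F'"
      using ex_bij_betw_nat_finite[OF fF'] by blast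
    define N where "N = card F'"
    define c where "c = (\<lambda>i. h (gg i))"
    define f where "f = (\<lambda>i. delta1 (fst (gg i)))"
    define g where "g = (\<lambda>i. delta1 (snd (gg i)))"
    have mem: "\<forall>i<N. f i \<in> Vs m \<and> g i \<in> Vs n"
    proof (intro allI impI conjI)
      fix i assume "i < N"
      then have "gg i \<in> F'" using gg by (auto simp: N_def bij_betw_def)
      then have "fst (gg i) \<ge> int m" "snd (gg i) \<ge> int n" by (auto simp: F'_def)
      then show "f i \<in> Vs m" "g i \<in> Vs n"
        by (auto simp: Vs_def f_def g_def intro!: delta_H2) (auto simp: delta1_def)
    qed
    have sumeq: "(\<Sum>i<N. c i * f i a * g i b) = (if (a, b) \<in> F' then h (a, b) else 0)" for a b
    proof -
      have "(\<Sum>i<N. c i * f i a * g i b) =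
            (\<Sum>i\<in>{0..<card F'}. (\<lambda>k. h k * delta1 (fst k) a * delta1 (snd k) b) (gg i))"
        by (simp add: N_def c_def f_def g_def lessThan_atLeast0)
      also have "\<dots> = (\<Sum>k\<in>F'. h k * delta1 (fst k) a * delta1 (snd k) b)"
        by (rule sum.reindex_bij_betw[OF gg])
      also have "\<dots> = (\<Sum>k\<in>F'. if k = (a, b) then h k else 0)"
        by (rule sum.cong) (auto simp: delta1_def)
      also have "\<dots> = (if (a, b) \<in> F' then h (a, b) else 0)"
        using fF' by simp
      finally show ?thesis .
    qed
    have deq: "(\<lambda>(a, b). h (a, b) - (\<Sum>i<N. c i * f i a * g i b)) = (\<lambda>k. if k \<in> F then 0 else h k)"
    proof (rule ext, clarify)
      fix a b
      show "h (a, b) - (\<Sum>i<N. c i * f i a * g i b) = (if (a, b) \<in> F then 0 else h (a, b))"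
        using hz[of a b] by (auto simp: sumeq F'_def)
    qed
    have "l2norm (\<lambda>k. if k \<in> F then 0 else h k) = sqrt (infsum (\<lambda>k. if k \<in> F then 0 else (cmod (h k))\<^sup>2) UNIV)"
      unfolding l2norm_def by (rule arg_cong[where f = sqrt], rule infsum_cong) auto
    also have "\<dots> < sqrt (e\<^sup>2)" by (rule real_sqrt_less_mono) (use F(2) in simp)
    also have "\<dots> = e" using e by simp
    finally have "l2norm (\<lambda>(a, b). h (a, b) - (\<Sum>i<N. c i * f i a * g i b)) < e" using deq by simp
    then show "\<exists>N (c :: nat \<Rightarrow> complex) (f :: nat \<Rightarrow> int \<Rightarrow> complex) (g :: nat \<Rightarrow> int \<Rightarrow> complex).
      (\<forall>i<N. f i \<in> Vs m \<and> g i \<in> Vs n) \<and>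
      l2norm (\<lambda>(a, b). h (a, b) - (\<Sum>i<N. c i * f i a * g i b)) < e"
      using mem by blast
  qed
qed

lemma bicodim_Qs: "has_bicodim (Qs m n) m n"
  unfolding has_bicodim_def
  using codim_Vs tensor_sub tensor_sup by blast


lemma restr_norm_nonneg:
  assumes "(\<lambda>_. 0) \<in> I" "I \<subseteq> H2_2"
  shows "restr_norm (Hf m n) I \<ge> 0"
proof -
  let ?X = "{l2norm (Hf m n f) | f. f \<in> I \<and> l2norm f \<le> 1}"
  have "0 \<in> ?X" using assms(1) by (auto simp: Hf_zero l2norm_zero intro!: exI[of _ "\<lambda>_. 0"])
  moreover have "bdd_above ?X"
  proof (rule bdd_aboveI[of _ 1], clarify)
    fix f assume "f \<in> I" "l2norm f \<le> 1"
    then show "l2norm (Hf m n f) \<le> 1" using assms(2) Hf_bound[of f m n] by (auto simp: H2_2_def)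
  qed
  ultimately show ?thesis unfolding restr_norm_def by (rule cSup_upper)
qed

theorem mainTheorem9:
  fixes m n :: nat
  assumes "m > 0" and "n > 0"
  shows "\<exists>\<phi> :: int \<times> int \<Rightarrow> complex. l2 \<phi> \<and>
           (\<exists>f\<in>H2_2. hankel \<phi> f \<noteq> (\<lambda>_. 0)) \<and>
           finite_type (hankel \<phi>) m n \<and>
           (\<forall>p q. m < p \<and> n < q \<longrightarrow> sigma p q (hankel \<phi>) = 0)"
proof (intro exI[of _ "phi0 m n"] conjI allI impI)
  have H: "hankel (phi0 m n) = Hf m n" by (rule ext) (rule hankel_phi0)
  show "l2 (phi0 m n)" by (rule l2_phi0)
  define f0 :: "int \<times> int \<Rightarrow> complex" where "f0 = (\<lambda>k. if k = (0, 0) then 1 else 0)"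
  have "f0 \<in> H2_2" unfolding H2_2_def f0_def
    by (auto intro!: l2_finite_support[of "{(0,0)}"] split: if_splits)
  moreover have "Hf m n f0 (- int m, - int n) = 1" using assms by (simp add: Hf_def f0_def)
  ultimately show "\<exists>f\<in>H2_2. hankel (phi0 m n) f \<noteq> (\<lambda>_. 0)" unfolding H
    by (metis zero_neq_one)
  show "finite_type (hankel (phi0 m n)) m n" unfolding H finite_type_def
    using bounded_Hf kernel_Hf bicodim_Qs by simp
  fix p q assume pq: "m < p \<and> n < q"
  let ?S = "{restr_norm (Hf m n) I | I. I \<subseteq> H2_2 \<and> shift_invariant I \<and>
      (\<exists>p' q'. p' \<le> p \<and> q' \<le> q \<and> has_bicodim I p' q')}"
  have "restr_norm (Hf m n) (Qs m n) = 0"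
  proof -
    have "{l2norm (Hf m n f) | f. f \<in> Qs m n \<and> l2norm f \<le> 1} = {0}"
    proof -
      have "Hf m n f = (\<lambda>_. 0)" if "f \<in> Qs m n" for f
        using that kernel_Hf[of m n] by (auto simp: op_kernel_def)
      moreover have "(\<lambda>_. 0) \<in> Qs m n" by (simp add: Qs_def l2_zero)
      ultimately show ?thesis by (auto simp: l2norm_zero intro!: exI[of _ "\<lambda>_. 0"])
    qed
    then show ?thesis unfolding restr_norm_def by simp
  qed
  moreover have "\<exists>p' q'. p' \<le> p \<and> q' \<le> q \<and> has_bicodim (Qs m n) p' q'"
    using bicodim_Qs[of m n] pq less_imp_le by blast
  ultimately have "0 \<in> ?S" using Qs_H2 shift_inv_Qs
    by (intro CollectI exI[of _ "Qs m n"]) auto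
  moreover have "x \<ge> 0" if "x \<in> ?S" for x
  proof -
    obtain I p' q' where I: "x = restr_norm (Hf m n) I" "I \<subseteq> H2_2" "has_bicodim I p' q'"
      using \<open>x \<in> ?S\<close> by blast
    have "(\<lambda>_. 0) \<in> I" using I(3) zero_tensor unfolding has_bicodim_def by blast
    then show ?thesis using I restr_norm_nonneg by simp
  qed
  ultimately show "sigma p q (hankel (phi0 m n)) = 0" unfolding H sigma_def
    by (intro cInf_eq_minimum) auto
qed

end
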